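(* Let $\alpha=(\alpha_1,\dots,\alpha_t)$ be palindromic (i.e. $\alpha_i=\alpha_{t+1-i}$ for all $i$) with $t$ odd, let $F=\breve F(\alpha)$ with elements $x_1,\dots,x_n$. The statistics $\chi_{x_k}-\chi_{x_{n-k+1}}$ are $0$-mesic under rowmotion for all $k\in[n]$ if and only if the statistics $\hat\chi_{x_k}+\hat\chi_{x_{n-k+1}}$ are $1$-mesic under rowmotion for all $k\in[n]$.
   Context: A fence $\breve F(\alpha_1,\dots,\alpha_t)$ ($t\ge2$, positive integers, $\alpha_1,\alpha_t\ge2$) is the poset on $\{x_1,\dots,x_n\}$, $n=\alpha_1+\dots+\alpha_t-1$, with $a_i=\alpha_1+\dots+\alpha_i$, $a_0=0$, whose cover relations are: for $1\le j\le n-1$ with $a_{i-1}\le j<a_i$, $x_j\lessdot x_{j+1}$ if $i$ odd and $x_j\gtrdot x_{j+1}$ if $i$ even. $\mathcal J(F)$ is the set of order ideals; rowmotion $\rho$ sends $I$ to the order ideal generated by $\min(F\setminus I)$. $\hat\chi_q(I)=1$ if $q\in I$, else 0; $\chi_q(I)=1$ if $q\in\max(I)$, else 0. A statistic is $c$-mesic under rowmotion if its average over every $\rho$-orbit equals $c$. *)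

theory Defs
  imports Complex_Main
begin

definition is_ideal :: "nat set \<Rightarrow> (nat \<Rightarrow> nat \<Rightarrow> bool) \<Rightarrow> nat set \<Rightarrow> bool" where
  "is_ideal P le I \<longleftrightarrow> I \<subseteq> P \<and> (\<forall>x\<in>I. \<forall>y\<in>P. le y x \<longrightarrow> y \<in> I)"

definition ideals :: "nat set \<Rightarrow> (nat \<Rightarrow> nat \<Rightarrow> bool) \<Rightarrow> nat set set" where
  "ideals P le = {I. is_ideal P le I}"

definition min_set :: "(nat \<Rightarrow> nat \<Rightarrow> bool) \<Rightarrow> nat set \<Rightarrow> nat set" where
  "min_set le S = {x\<in>S. \<forall>y\<in>S. le y x \<longrightarrow> y = x}"

definition max_set :: "(nat \<Rightarrow> nat \<Rightarrow> bool) \<Rightarrow> nat set \<Rightarrow> nat set" where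
  "max_set le S = {x\<in>S. \<forall>y\<in>S. le x y \<longrightarrow> y = x}"

definition down_closure :: "nat set \<Rightarrow> (nat \<Rightarrow> nat \<Rightarrow> bool) \<Rightarrow> nat set \<Rightarrow> nat set" where
  "down_closure P le S = {y\<in>P. \<exists>x\<in>S. le y x}"

definition rowmotion :: "nat set \<Rightarrow> (nat \<Rightarrow> nat \<Rightarrow> bool) \<Rightarrow> nat set \<Rightarrow> nat set" where
  "rowmotion P le I = down_closure P le (min_set le (P - I))"

definition rho_orbit :: "nat set \<Rightarrow> (nat \<Rightarrow> nat \<Rightarrow> bool) \<Rightarrow> nat set \<Rightarrow> nat set set" where
  "rho_orbit P le I = {(rowmotion P le ^^ k) I | k. True}"

definition mesic :: "nat set \<Rightarrow> (nat \<Rightarrow> nat \<Rightarrow> bool) \<Rightarrow> (nat set \<Rightarrow> real) \<Rightarrow> real \<Rightarrow> bool" where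
  "mesic P le f c \<longleftrightarrow>
     (\<forall>I\<in>ideals P le. (\<Sum>J\<in>rho_orbit P le I. f J) / real (card (rho_orbit P le I)) = c)"

definition hat_chi :: "nat \<Rightarrow> nat set \<Rightarrow> real" where
  "hat_chi q I = (if q \<in> I then 1 else 0)"

definition chi :: "(nat \<Rightarrow> nat \<Rightarrow> bool) \<Rightarrow> nat \<Rightarrow> nat set \<Rightarrow> real" where
  "chi le q I = (if q \<in> max_set le I then 1 else 0)"

section \<open>Fences; element x_j is represented by the natural number j\<close>

definition fence_a :: "nat list \<Rightarrow> nat \<Rightarrow> nat" where
  "fence_a \<alpha> i = sum_list (take i \<alpha>)"

definition fence_n :: "nat list \<Rightarrow> nat" where
  "fence_n \<alpha> = sum_list \<alpha> - 1"

definition fence_elems :: "nat list \<Rightarrow> nat set" where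
  "fence_elems \<alpha> = {1..fence_n \<alpha>}"

definition fence_block :: "nat list \<Rightarrow> nat \<Rightarrow> nat" where
  "fence_block \<alpha> j = (LEAST i. j < fence_a \<alpha> i)"

definition fence_cover :: "nat list \<Rightarrow> nat \<Rightarrow> nat \<Rightarrow> bool" where
  "fence_cover \<alpha> x y \<longleftrightarrow>
     (1 \<le> x \<and> x \<le> fence_n \<alpha> - 1 \<and> y = x + 1 \<and> odd (fence_block \<alpha> x)) \<or>
     (1 \<le> y \<and> y \<le> fence_n \<alpha> - 1 \<and> x = y + 1 \<and> even (fence_block \<alpha> y))"

definition fence_le :: "nat list \<Rightarrow> nat \<Rightarrow> nat \<Rightarrow> bool" where
  "fence_le \<alpha> = (fence_cover \<alpha>)\<^sup>*\<^sup>*"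

end

theory Submission
  imports Defs
begin


locale cposet =
  fixes P :: "nat set" and cov :: "nat \<Rightarrow> nat \<Rightarrow> bool"
  assumes finP: "finite P"
    and cov_in: "cov x y \<Longrightarrow> x \<in> P \<and> y \<in> P"
    and cov_irr: "\<not> cov x x"
    and le_antisym: "cov\<^sup>*\<^sup>* x y \<Longrightarrow> cov\<^sup>*\<^sup>* y x \<Longrightarrow> x = y"
begin

abbreviation "le \<equiv> cov\<^sup>*\<^sup>*"
abbreviation "rho \<equiv> rowmotion P le"

lemma le_trans: "le x y \<Longrightarrow> le y z \<Longrightarrow> le x z"
  by (rule rtranclp_trans)

lemma le_in: "le x y \<Longrightarrow> x \<in> P \<Longrightarrow> y \<in> P"
  by (induction rule: rtranclp_induct) (auto dest: cov_in)

lemma ideal_sub: "I \<in> ideals P le \<Longrightarrow> I \<subseteq> P"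
  by (simp add: ideals_def is_ideal_def)

lemma ideal_down: "I \<in> ideals P le \<Longrightarrow> x \<in> I \<Longrightarrow> y \<in> P \<Longrightarrow> le y x \<Longrightarrow> y \<in> I"
  by (simp add: ideals_def is_ideal_def)

lemma rho_ideal: "rho I \<in> ideals P le"
  unfolding ideals_def is_ideal_def rowmotion_def down_closure_def
  by (auto intro: le_trans)

lemma max_cov: assumes "I \<in> ideals P le"
  shows "x \<in> max_set le I \<longleftrightarrow> x \<in> I \<and> (\<forall>z. cov x z \<longrightarrow> z \<notin> I)"
proof
  assume "x \<in> max_set le I"
  then show "x \<in> I \<and> (\<forall>z. cov x z \<longrightarrow> z \<notin> I)"
    unfolding max_set_def using cov_irr by fastforce
next
  assume h: "x \<in> I \<and> (\<forall>z. cov x z \<longrightarrow> z \<notin> I)"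
  have "y = x" if "y \<in> I" "le x y" for y
    using that(2)
  proof (cases rule: converse_rtranclpE)
    case (step z)
    then have "z \<in> I" using ideal_down[OF assms that(1)] cov_in by blast
    then show ?thesis using h step by blast
  qed simp
  then show "x \<in> max_set le I" using h unfolding max_set_def by blast
qed

lemma min_cov: assumes "I \<in> ideals P le"
  shows "x \<in> min_set le (P - I) \<longleftrightarrow> x \<in> P \<and> x \<notin> I \<and> (\<forall>z. cov z x \<longrightarrow> z \<in> I)"
proof
  assume "x \<in> min_set le (P - I)"
  then have x: "x \<in> P" "x \<notin> I" "\<forall>y\<in>P - I. le y x \<longrightarrow> y = x"
    unfolding min_set_def by auto
  have "z \<in> I" if "cov z x" for z
  proof (rule ccontr)
    assume "z \<notin> I"
    then have "z = x" using x(3) cov_in[OF that] that by blast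
    then show False using that cov_irr by simp
  qed
  then show "x \<in> P \<and> x \<notin> I \<and> (\<forall>z. cov z x \<longrightarrow> z \<in> I)" using x by blast
next
  assume h: "x \<in> P \<and> x \<notin> I \<and> (\<forall>z. cov z x \<longrightarrow> z \<in> I)"
  have "y = x" if "y \<in> P - I" "le y x" for y
    using that(2)
  proof (cases rule: rtranclp.cases)
    case (rtrancl_into_rtrancl z)
    then have "z \<in> I" using h by blast
    then have "y \<in> I" using ideal_down[OF assms] rtrancl_into_rtrancl that by blast
    then show ?thesis using that by blast
  qed simp
  then show "x \<in> min_set le (P - I)" using h unfolding min_set_def by blast
qed

lemma max_rho: "max_set le (rho I) = min_set le (P - I)"
proof
  show "max_set le (rho I) \<subseteq> min_set le (P - I)"
  proof
    fix x assume "x \<in> max_set le (rho I)"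
    then obtain m where m: "m \<in> min_set le (P - I)" "le x m" and xr: "x \<in> rho I"
      and mx: "\<forall>y\<in>rho I. le x y \<longrightarrow> y = x"
      unfolding max_set_def rowmotion_def down_closure_def by blast
    have "m \<in> rho I" using m unfolding rowmotion_def down_closure_def min_set_def by auto
    then have "m = x" using mx m by blast
    then show "x \<in> min_set le (P - I)" using m by simp
  qed
next
  show "min_set le (P - I) \<subseteq> max_set le (rho I)"
  proof
    fix x assume x: "x \<in> min_set le (P - I)"
    have xr: "x \<in> rho I" using x unfolding rowmotion_def down_closure_def min_set_def by auto
    have "y = x" if "y \<in> rho I" "le x y" for y
    proof -
      have "y \<in> down_closure P le (min_set le (P - I))" using that(1) by (simp add: rowmotion_def)
      then obtain m where m: "m \<in> min_set le (P - I)" "le y m"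
        unfolding down_closure_def by blast
      have "le x m" using that(2) m(2) by (rule le_trans)
      then have "x = m" using m(1) x unfolding min_set_def by blast
      then show ?thesis using le_antisym that(2) m(2) by blast
    qed
    then show "x \<in> max_set le (rho I)" using xr unfolding max_set_def by blast
  qed
qed

lemma exists_min_below:
  assumes "I \<in> ideals P le" "x \<in> P - I"
  shows "\<exists>m\<in>min_set le (P - I). le m x"
  using assms(2)
proof (induction "card {y\<in>P. le y x}" arbitrary: x rule: less_induct)
  case less
  show ?case
  proof (cases "x \<in> min_set le (P - I)")
    case True then show ?thesis by blast
  next
    case False
    then obtain y where y: "y \<in> P - I" "le y x" "y \<noteq> x"
      using less.prems unfolding min_set_def by blast
    have sub: "{z\<in>P. le z y} \<subset> {z\<in>P. le z x}"
    proof
      show "{z\<in>P. le z y} \<subseteq> {z\<in>P. le z x}" using y le_trans by blast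
      have "x \<notin> {z\<in>P. le z y}" using le_antisym y by blast
      moreover have "x \<in> {z\<in>P. le z x}" using less.prems by simp
      ultimately show "{z\<in>P. le z y} \<noteq> {z\<in>P. le z x}" by blast
    qed
    have "card {z\<in>P. le z y} < card {z\<in>P. le z x}"
      by (rule psubset_card_mono) (use finP sub in auto)
    then obtain m where "m\<in>min_set le (P - I)" "le m y" using less.hyps y(1) by blast
    then show ?thesis using y le_trans by blast
  qed
qed

lemma ideal_from_rho:
  assumes "I \<in> ideals P le"
  shows "I = P - {x\<in>P. \<exists>m\<in>max_set le (rho I). le m x}"
proof -
  have "x \<notin> I" if "x \<in> P" "m \<in> min_set le (P - I)" "le m x" for x m
  proof
    assume "x \<in> I"
    then have "m \<in> I" using that ideal_down[OF assms] unfolding min_set_def by blast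
    then show False using that unfolding min_set_def by blast
  qed
  then show ?thesis using exists_min_below[OF assms] ideal_sub[OF assms] unfolding max_rho
    by blast
qed

lemma rho_inj: "inj_on rho (ideals P le)"
proof
  fix I J assume "I \<in> ideals P le" "J \<in> ideals P le" "rho I = rho J"
  then show "I = J" using ideal_from_rho by metis
qed

definition orb where "orb I = rho_orbit P le I"

lemma orb_ideals: "I \<in> ideals P le \<Longrightarrow> orb I \<subseteq> ideals P le"
proof -
  assume I: "I \<in> ideals P le"
  have "(rho ^^ k) I \<in> ideals P le" for k
    by (cases k) (use I rho_ideal in auto)
  then show ?thesis unfolding orb_def rho_orbit_def by blast
qed

lemma orb_finite: "I \<in> ideals P le \<Longrightarrow> finite (orb I)"
proof -
  assume I: "I \<in> ideals P le"
  have "orb I \<subseteq> Pow P" using orb_ideals[OF I] ideal_sub by blast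
  then show ?thesis using finP finite_subset by blast
qed

lemma orb_mem: "I \<in> orb I"
  unfolding orb_def rho_orbit_def by (auto intro: exI[of _ 0])

lemma orb_card: "I \<in> ideals P le \<Longrightarrow> card (orb I) > 0"
  using orb_finite orb_mem card_gt_0_iff by blast

lemma orb_image: assumes "I \<in> ideals P le" shows "rho ` orb I = orb I"
proof -
  have "rho ` orb I \<subseteq> orb I"
  proof
    fix K assume "K \<in> rho ` orb I"
    then obtain k where "K = rho ((rho ^^ k) I)" unfolding orb_def rho_orbit_def by blast
    then have "K = (rho ^^ Suc k) I" by simp
    then show "K \<in> orb I" unfolding orb_def rho_orbit_def by blast
  qed
  moreover have "inj_on rho (orb I)" using rho_inj orb_ideals[OF assms] inj_on_subset by blast
  ultimately show ?thesis using endo_inj_surj orb_finite[OF assms] by blast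
qed

lemma orb_sum_shift: assumes "I \<in> ideals P le"
  shows "(\<Sum>J\<in>orb I. f (rho J)) = (\<Sum>J\<in>orb I. (f J :: real))"
proof -
  have "inj_on rho (orb I)" using rho_inj orb_ideals[OF assms] inj_on_subset by blast
  then have "(\<Sum>J\<in>rho ` orb I. f J) = (\<Sum>J\<in>orb I. f (rho J))" by (rule sum.reindex_cong) auto
  then show ?thesis using orb_image[OF assms] by simp
qed


definition hs where "hs I q = (\<Sum>J\<in>orb I. hat_chi q J)"
definition cs where "cs I q = (\<Sum>J\<in>orb I. chi le q J)"
definition NN where "NN I = real (card (orb I))"

lemma R1: assumes "I \<in> ideals P le" "\<forall>z. \<not> cov p z"
  shows "cs I p = hs I p"
  unfolding cs_def hs_def
proof (rule sum.cong[OF refl])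
  fix J assume "J \<in> orb I"
  then have J: "J \<in> ideals P le" using orb_ideals[OF assms(1)] by blast
  show "chi le p J = hat_chi p J"
  proof -
    have "p \<in> max_set le J \<longleftrightarrow> p \<in> J" unfolding max_cov[OF J] using assms(2) by blast
    then show ?thesis unfolding chi_def hat_chi_def by simp
  qed
qed

lemma R2: assumes "I \<in> ideals P le" "cov p a" "\<forall>z. cov p z \<longrightarrow> z = a"
  shows "cs I p = hs I p - hs I a"
  unfolding cs_def hs_def sum_subtractf[symmetric]
proof (rule sum.cong[OF refl])
  fix J assume "J \<in> orb I"
  then have J: "J \<in> ideals P le" using orb_ideals[OF assms(1)] by blast
  have "a \<in> J \<Longrightarrow> p \<in> J" using ideal_down[OF J] assms(2) cov_in by blast
  moreover have "p \<in> max_set le J \<longleftrightarrow> p \<in> J \<and> a \<notin> J"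
    unfolding max_cov[OF J] using assms(2,3) by blast
  ultimately show "chi le p J = hat_chi p J - hat_chi a J"
    unfolding chi_def hat_chi_def by (cases "p \<in> J"; cases "a \<in> J") auto
qed

lemma R3: assumes "I \<in> ideals P le" "p \<in> P" "\<forall>z. \<not> cov z p"
  shows "cs I p = NN I - hs I p"
proof -
  have "cs I p = (\<Sum>J\<in>orb I. chi le p (rho J))"
    unfolding cs_def by (rule orb_sum_shift[OF assms(1), symmetric])
  also have "\<dots> = (\<Sum>J\<in>orb I. 1 - hat_chi p J)"
  proof (rule sum.cong[OF refl])
    fix J assume "J \<in> orb I"
    then have J: "J \<in> ideals P le" using orb_ideals[OF assms(1)] by blast
    show "chi le p (rho J) = 1 - hat_chi p J"
    proof -
      have "p \<in> max_set le (rho J) \<longleftrightarrow> p \<notin> J"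
        unfolding max_rho min_cov[OF J] using assms(2,3) by blast
      then show ?thesis unfolding chi_def hat_chi_def by simp
    qed
  qed
  also have "\<dots> = NN I - hs I p"
    unfolding hs_def NN_def sum_subtractf by simp
  finally show ?thesis .
qed

lemma R4: assumes "I \<in> ideals P le" "p \<in> P" "cov b p" "\<forall>z. cov z p \<longrightarrow> z = b"
  shows "cs I p = hs I b - hs I p"
proof -
  have "cs I p = (\<Sum>J\<in>orb I. chi le p (rho J))"
    unfolding cs_def by (rule orb_sum_shift[OF assms(1), symmetric])
  also have "\<dots> = (\<Sum>J\<in>orb I. hat_chi b J - hat_chi p J)"
  proof (rule sum.cong[OF refl])
    fix J assume "J \<in> orb I"
    then have J: "J \<in> ideals P le" using orb_ideals[OF assms(1)] by blast
    have "p \<in> J \<Longrightarrow> b \<in> J" using ideal_down[OF J] assms(3) cov_in by blast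
    moreover have "p \<in> max_set le (rho J) \<longleftrightarrow> p \<notin> J \<and> b \<in> J"
      unfolding max_rho min_cov[OF J] using assms(2,3,4) by blast
    ultimately show "chi le p (rho J) = hat_chi b J - hat_chi p J"
      unfolding chi_def hat_chi_def by (cases "p \<in> J"; cases "b \<in> J") auto
  qed
  also have "\<dots> = hs I b - hs I p"
    unfolding hs_def sum_subtractf by simp
  finally show ?thesis .
qed

end



locale fence_ctx =
  fixes \<alpha> :: "nat list"
  assumes len2: "length \<alpha> \<ge> 2"
    and hd2: "hd \<alpha> \<ge> 2"
    and pal: "rev \<alpha> = \<alpha>"
    and todd: "odd (length \<alpha>)"
begin

abbreviation "n \<equiv> fence_n \<alpha>"
abbreviation "t \<equiv> length \<alpha>"
abbreviation "S \<equiv> sum_list \<alpha>"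
abbreviation "A \<equiv> fence_a \<alpha>"
abbreviation "cov \<equiv> fence_cover \<alpha>"

lemma S_ge: "S \<ge> 2"
proof -
  obtain x xs where "\<alpha> = x # xs" using len2 by (cases \<alpha>) auto
  then show ?thesis using hd2 by simp
qed

lemma n_eq: "n = S - 1" by (simp add: fence_n_def)

lemma A_mono: "i \<le> j \<Longrightarrow> A i \<le> A j"
proof -
  assume "i \<le> j"
  then obtain d where "j = i + d" using le_Suc_ex by blast
  then show ?thesis by (simp add: fence_a_def take_add)
qed

lemma A0: "A 0 = 0" by (simp add: fence_a_def)
lemma At: "A t = S" by (simp add: fence_a_def)

lemma A_pal: assumes "i \<le> t" shows "A (t - i) = S - A i"
proof -
  have "take i \<alpha> = take i (rev \<alpha>)" using pal by simp
  also have "\<dots> = rev (drop (t - i) \<alpha>)" by (simp add: take_rev)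
  finally have "sum_list (take i \<alpha>) = sum_list (drop (t - i) \<alpha>)" by simp
  moreover have "S = sum_list (take (t - i) \<alpha>) + sum_list (drop (t - i) \<alpha>)"
    by (metis append_take_drop_id sum_list_append)
  ultimately show ?thesis by (simp add: fence_a_def)
qed

lemma block_props: assumes "j < S"
  shows "j < A (fence_block \<alpha> j)" "1 \<le> fence_block \<alpha> j" "fence_block \<alpha> j \<le> t"
    "A (fence_block \<alpha> j - 1) \<le> j"
proof -
  have ex: "\<exists>i. j < A i" using assms At by metis
  show 1: "j < A (fence_block \<alpha> j)" unfolding fence_block_def using LeastI_ex[OF ex] .
  show "fence_block \<alpha> j \<le> t" unfolding fence_block_def using assms At by (metis Least_le)
  show "1 \<le> fence_block \<alpha> j" using 1 A0 by (cases "fence_block \<alpha> j") auto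
  then show "A (fence_block \<alpha> j - 1) \<le> j" unfolding fence_block_def
    using not_less_Least[of "fence_block \<alpha> j - 1" "\<lambda>i. j < A i"] unfolding fence_block_def
    by (simp add: not_less)
qed

lemma block_eq: assumes "1 \<le> i" "A (i - 1) \<le> j" "j < A i"
  shows "fence_block \<alpha> j = i"
  unfolding fence_block_def
proof (rule Least_equality)
  show "j < A i" by fact
  fix m assume "j < A m"
  show "i \<le> m"
  proof (rule ccontr)
    assume "\<not> i \<le> m"
    then have "A m \<le> A (i - 1)" by (intro A_mono) simp
    then show False using assms \<open>j < A m\<close> by simp
  qed
qed

lemma block_sym: assumes "j \<le> n"
  shows "fence_block \<alpha> (n - j) = t + 1 - fence_block \<alpha> j"
proof -
  define i where "i = fence_block \<alpha> j"
  have jS: "j < S" using assms S_ge n_eq by simp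
  note bp = block_props[OF jS, folded i_def]
  have e1: "A (t - i) = S - A i" using A_pal bp(3) by simp
  have e2: "A (t - (i - 1)) = S - A (i - 1)" using A_pal bp(3) by simp
  have e3: "t - (i - 1) = t + 1 - i" using bp(2,3) by simp
  have "A (t + 1 - i - 1) \<le> n - j"
    using e1 bp(1) bp(2) bp(3) n_eq by (simp add: Suc_diff_le)
  moreover have "S - Suc j < S - A (i - 1)" using bp(4) jS by (intro diff_less_mono2) auto
  then have "n - j < A (t + 1 - i)" using e2 e3 n_eq by simp
  ultimately show ?thesis unfolding i_def[symmetric]
    using bp(3) by (intro block_eq) auto
qed

lemma block_parity: assumes "j \<le> n"
  shows "odd (fence_block \<alpha> (n - j)) \<longleftrightarrow> odd (fence_block \<alpha> j)"
proof -
  have jS: "j < S" using assms S_ge n_eq by simp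
  have "fence_block \<alpha> j \<le> t" using block_props[OF jS] by simp
  moreover obtain b where "t = 2 * b + 1" using todd by (rule oddE)
  then have m: "t + 1 = 2 * (b + 1)" by simp
  define m where "m = b + 1"
  note m = m[folded m_def]
  ultimately have "fence_block \<alpha> j \<le> 2 * m" by simp
  then have "even ((2 * m - fence_block \<alpha> j) + fence_block \<alpha> j)" by simp
  then show ?thesis unfolding block_sym[OF assms] m by (metis even_add)
qed


lemma n_ge: "n \<ge> 1" using S_ge n_eq by simp

lemma C1: "cov x y \<Longrightarrow> x \<in> {1..n} \<and> y \<in> {1..n}"
  unfolding fence_cover_def using n_ge by auto

lemma C2: "cov x y \<Longrightarrow> y = x + 1 \<or> x = y + 1"
  unfolding fence_cover_def by auto

lemma C3: "\<not> (cov x y \<and> cov y x)"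
  unfolding fence_cover_def by auto

lemma C4: "1 \<le> j \<Longrightarrow> j < n \<Longrightarrow> cov j (j + 1) \<or> cov (j + 1) j"
  unfolding fence_cover_def by auto

lemma C5: assumes "cov x y" shows "cov (n - y + 1) (n - x + 1)"
  using assms unfolding fence_cover_def
proof (elim disjE conjE)
  assume h: "1 \<le> x" "x \<le> n - 1" "y = x + 1" "odd (fence_block \<alpha> x)"
  then have "odd (fence_block \<alpha> (n - x))" using block_parity[of x] by simp
  moreover have "1 \<le> n - x" "n - x \<le> n - 1" using h by arith+
  ultimately show "1 \<le> n - y + 1 \<and> n - y + 1 \<le> n - 1 \<and> n - x + 1 = n - y + 1 + 1 \<and> odd (fence_block \<alpha> (n - y + 1)) \<or>
    1 \<le> n - x + 1 \<and> n - x + 1 \<le> n - 1 \<and> n - y + 1 = n - x + 1 + 1 \<and> even (fence_block \<alpha> (n - x + 1))"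
    using h by (intro disjI1) (simp add: Suc_diff_Suc)
next
  assume h: "1 \<le> y" "y \<le> n - 1" "x = y + 1" "even (fence_block \<alpha> y)"
  then have "even (fence_block \<alpha> (n - y))" using block_parity[of y] by simp
  moreover have "1 \<le> n - y" "n - y \<le> n - 1" using h by arith+
  ultimately show "1 \<le> n - y + 1 \<and> n - y + 1 \<le> n - 1 \<and> n - x + 1 = n - y + 1 + 1 \<and> odd (fence_block \<alpha> (n - y + 1)) \<or>
    1 \<le> n - x + 1 \<and> n - x + 1 \<le> n - 1 \<and> n - y + 1 = n - x + 1 + 1 \<and> even (fence_block \<alpha> (n - x + 1))"
    using h by (intro disjI2) (simp add: Suc_diff_Suc)
qed

lemma path: "cov\<^sup>*\<^sup>* x y \<Longrightarrow> (x \<le> y \<and> (\<forall>j. x \<le> j \<and> j < y \<longrightarrow> cov j (j+1))) \<or>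
   (y \<le> x \<and> (\<forall>j. y \<le> j \<and> j < x \<longrightarrow> cov (j+1) j))"
proof (induction rule: rtranclp_induct)
  case base then show ?case by auto
next
  case (step y z)
  from C2[OF step.hyps(2)] show ?case
  proof
    assume z: "z = y + 1"
    from step.IH show ?case
    proof
      assume "x \<le> y \<and> (\<forall>j. x \<le> j \<and> j < y \<longrightarrow> cov j (j+1))"
      then show ?case using z step.hyps(2) less_Suc_eq by auto
    next
      assume h: "y \<le> x \<and> (\<forall>j. y \<le> j \<and> j < x \<longrightarrow> cov (j+1) j)"
      show ?case
      proof (cases "y = x")
        case True then show ?thesis using z step.hyps(2) by (auto simp: less_Suc_eq_le)
      next
        case False
        then have "cov (y+1) y" using h by auto
        then show ?thesis using C3 step.hyps(2) z by blast
      qed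
    qed
  next
    assume z: "y = z + 1"
    from step.IH show ?case
    proof
      assume h: "y \<le> x \<and> (\<forall>j. y \<le> j \<and> j < x \<longrightarrow> cov (j+1) j)"
      have "\<forall>j. z \<le> j \<and> j < x \<longrightarrow> cov (j+1) j"
      proof (intro allI impI)
        fix j assume j: "z \<le> j \<and> j < x"
        show "cov (j+1) j"
        proof (cases "j = z")
          case True then show ?thesis using z step.hyps(2) by simp
        next
          case False then show ?thesis using h j z by auto
        qed
      qed
      then show ?case using h z by auto
    next
      assume h: "x \<le> y \<and> (\<forall>j. x \<le> j \<and> j < y \<longrightarrow> cov j (j+1))"
      show ?case
      proof (cases "y = x")
        case True then show ?thesis using z step.hyps(2) by (auto simp: less_Suc_eq_le)
      next
        case False
        then have "cov z (z+1)" using h z by auto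
        then show ?thesis using C3 step.hyps(2) z by blast
      qed
    qed
  qed
qed

lemma antisym: assumes "cov\<^sup>*\<^sup>* x y" "cov\<^sup>*\<^sup>* y x" shows "x = y"
proof (rule ccontr)
  assume "x \<noteq> y"
  then consider "x < y" | "y < x" by linarith
  then show False
  proof cases
    case 1
    then have "cov x (x+1)" "cov (x+1) x" using path[OF assms(1)] path[OF assms(2)] by auto
    then show False using C3 by blast
  next
    case 2
    then have "cov y (y+1)" "cov (y+1) y" using path[OF assms(1)] path[OF assms(2)] by auto
    then show False using C3 by blast
  qed
qed

sublocale cp: cposet "{1..n}" cov
  by unfold_locales (use C1 C3 antisym in auto)


abbreviation "ph k \<equiv> n - k + 1"

lemma ph_in: "k \<in> {1..n} \<Longrightarrow> ph k \<in> {1..n}" by auto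
lemma ph_ph: "k \<in> {1..n} \<Longrightarrow> ph (ph k) = k" by auto

lemma classify: assumes "k \<in> {1..n}"
  shows "(\<forall>z. \<not> cov k z) \<or> (\<forall>z. \<not> cov z k) \<or>
    (\<exists>a b. cov k a \<and> (\<forall>z. cov k z \<longrightarrow> z = a) \<and> cov b k \<and> (\<forall>z. cov z k \<longrightarrow> z = b)
       \<and> (a = k - 1 \<or> b = k - 1) \<and> 1 \<le> k - 1)"
proof (cases "(\<forall>z. \<not> cov k z) \<or> (\<forall>z. \<not> cov z k)")
  case True then show ?thesis by blast
next
  case False
  then obtain a b where ab: "cov k a" "cov b k" by blast
  have a: "a = k + 1 \<or> k = a + 1" using C2[OF ab(1)] by blast
  have b: "k = b + 1 \<or> b = k + 1" using C2[OF ab(2)] by blast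
  have ne: "a \<noteq> b" using C3 ab by blast
  have ua: "\<forall>z. cov k z \<longrightarrow> z = a"
  proof (intro allI impI)
    fix z assume z: "cov k z"
    have "z \<noteq> b" using C3 z ab by blast
    then show "z = a" using C2[OF z] a b ne by arith
  qed
  have ub: "\<forall>z. cov z k \<longrightarrow> z = b"
  proof (intro allI impI)
    fix z assume z: "cov z k"
    have "z \<noteq> a" using C3 z ab by blast
    then show "z = b" using C2[OF z] a b ne by arith
  qed
  have "a \<ge> 1" "b \<ge> 1" using C1 ab by auto
  then have "(a = k - 1 \<or> b = k - 1) \<and> 1 \<le> k - 1" using a b ne by arith
  then show ?thesis using ab ua ub by blast
qed

lemma no_up_ph: assumes "k \<in> {1..n}" "\<forall>z. \<not> cov k z" shows "\<forall>z. \<not> cov z (ph k)"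
proof (intro allI notI)
  fix z assume "cov z (ph k)"
  then have "cov (ph (ph k)) (ph z)" by (rule C5)
  then show False using assms ph_ph by simp
qed

lemma no_down_ph: assumes "k \<in> {1..n}" "\<forall>z. \<not> cov z k" shows "\<forall>z. \<not> cov (ph k) z"
proof (intro allI notI)
  fix z assume "cov (ph k) z"
  then have "cov (ph z) (ph (ph k))" by (rule C5)
  then show False using assms ph_ph by simp
qed

lemma uniq_up_ph: assumes "k \<in> {1..n}" "cov k a" "\<forall>z. cov k z \<longrightarrow> z = a"
  shows "cov (ph a) (ph k)" "\<forall>z. cov z (ph k) \<longrightarrow> z = ph a"
proof -
  show "cov (ph a) (ph k)" using assms(2) C5 by blast
  show "\<forall>z. cov z (ph k) \<longrightarrow> z = ph a"
  proof (intro allI impI)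
    fix z assume z: "cov z (ph k)"
    then have "cov (ph (ph k)) (ph z)" by (rule C5)
    then have "cov k (ph z)" using ph_ph assms(1) by simp
    then have "ph z = a" using assms(3) by blast
    then show "z = ph a" using C1[OF z] by auto
  qed
qed

lemma uniq_down_ph: assumes "k \<in> {1..n}" "cov b k" "\<forall>z. cov z k \<longrightarrow> z = b"
  shows "cov (ph k) (ph b)" "\<forall>z. cov (ph k) z \<longrightarrow> z = ph b"
proof -
  show "cov (ph k) (ph b)" using assms(2) C5 by blast
  show "\<forall>z. cov (ph k) z \<longrightarrow> z = ph b"
  proof (intro allI impI)
    fix z assume z: "cov (ph k) z"
    then have "cov (ph z) (ph (ph k))" by (rule C5)
    then have "cov (ph z) k" using ph_ph assms(1) by simp
    then have "ph z = b" using assms(3) by blast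
    then show "z = ph b" using C1[OF z] by auto
  qed
qed

lemma main_orbit:
  assumes I: "I \<in> ideals {1..n} cov\<^sup>*\<^sup>*"
  shows "(\<forall>k\<in>{1..n}. cp.cs I k = cp.cs I (ph k)) \<longleftrightarrow>
         (\<forall>k\<in>{1..n}. cp.hs I k + cp.hs I (ph k) = cp.NN I)"
proof
  assume A: "\<forall>k\<in>{1..n}. cp.cs I k = cp.cs I (ph k)"
  show "\<forall>k\<in>{1..n}. cp.hs I k + cp.hs I (ph k) = cp.NN I"
  proof
    fix k :: nat assume "k \<in> {1..n}"
    then show "cp.hs I k + cp.hs I (ph k) = cp.NN I"
    proof (induction k rule: less_induct)
      case (less k)
      note k = less.prems
      have pk: "ph k \<in> {1..n}" using ph_in[OF k] .
      have Ak: "cp.cs I k = cp.cs I (ph k)" using A k by blast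
      from classify[OF k] consider
        (mx) "\<forall>z. \<not> cov k z" | (mn) "\<forall>z. \<not> cov z k" |
        (mid) a b where "cov k a" "\<forall>z. cov k z \<longrightarrow> z = a" "cov b k" "\<forall>z. cov z k \<longrightarrow> z = b"
           "a = k - 1 \<or> b = k - 1" "1 \<le> k - 1"
        by blast
      then show ?case
      proof cases
        case mx
        have "cp.cs I k = cp.hs I k" by (rule cp.R1[OF I mx])
        moreover have "cp.cs I (ph k) = cp.NN I - cp.hs I (ph k)"
          by (rule cp.R3[OF I pk no_up_ph[OF k mx]])
        ultimately show ?thesis using Ak by simp
      next
        case mn
        have "cp.cs I k = cp.NN I - cp.hs I k" by (rule cp.R3[OF I k mn])
        moreover have "cp.cs I (ph k) = cp.hs I (ph k)"
          by (rule cp.R1[OF I no_down_ph[OF k mn]])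
        ultimately show ?thesis using Ak by simp
      next
        case mid
        have ain: "a \<in> {1..n}" "b \<in> {1..n}" using C1 mid(1,3) by auto
        have r2: "cp.cs I k = cp.hs I k - cp.hs I a" by (rule cp.R2[OF I mid(1,2)])
        have r4p: "cp.cs I (ph k) = cp.hs I (ph a) - cp.hs I (ph k)"
          using cp.R4[OF I pk uniq_up_ph[OF k mid(1,2)]] .
        have r4: "cp.cs I k = cp.hs I b - cp.hs I k" by (rule cp.R4[OF I k mid(3,4)])
        have r2p: "cp.cs I (ph k) = cp.hs I (ph k) - cp.hs I (ph b)"
          using cp.R2[OF I uniq_down_ph[OF k mid(3,4)]] .
        from mid(5) show ?thesis
        proof
          assume "a = k - 1"
          then have "a < k" using mid(6) by simp
          then have "cp.hs I a + cp.hs I (ph a) = cp.NN I" using less.IH ain by blast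
          then show ?thesis using r2 r4p Ak by simp
        next
          assume "b = k - 1"
          then have "b < k" using mid(6) by simp
          then have "cp.hs I b + cp.hs I (ph b) = cp.NN I" using less.IH ain by blast
          then show ?thesis using r4 r2p Ak by simp
        qed
      qed
    qed
  qed
next
  assume B: "\<forall>k\<in>{1..n}. cp.hs I k + cp.hs I (ph k) = cp.NN I"
  show "\<forall>k\<in>{1..n}. cp.cs I k = cp.cs I (ph k)"
  proof
    fix k :: nat assume k: "k \<in> {1..n}"
    have pk: "ph k \<in> {1..n}" using ph_in[OF k] .
    have Bk: "cp.hs I k + cp.hs I (ph k) = cp.NN I" using B k by blast
    from classify[OF k] consider
      (mx) "\<forall>z. \<not> cov k z" | (mn) "\<forall>z. \<not> cov z k" |
      (mid) a b where "cov k a" "\<forall>z. cov k z \<longrightarrow> z = a" "cov b k" "\<forall>z. cov z k \<longrightarrow> z = b"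
      by blast
    then show "cp.cs I k = cp.cs I (ph k)"
    proof cases
      case mx
      have "cp.cs I k = cp.hs I k" by (rule cp.R1[OF I mx])
      moreover have "cp.cs I (ph k) = cp.NN I - cp.hs I (ph k)"
        by (rule cp.R3[OF I pk no_up_ph[OF k mx]])
      ultimately show ?thesis using Bk by simp
    next
      case mn
      have "cp.cs I k = cp.NN I - cp.hs I k" by (rule cp.R3[OF I k mn])
      moreover have "cp.cs I (ph k) = cp.hs I (ph k)"
        by (rule cp.R1[OF I no_down_ph[OF k mn]])
      ultimately show ?thesis using Bk by simp
    next
      case mid
      have ain: "a \<in> {1..n}" using C1 mid(1) by auto
      have Ba: "cp.hs I a + cp.hs I (ph a) = cp.NN I" using B ain by blast
      have r2: "cp.cs I k = cp.hs I k - cp.hs I a" by (rule cp.R2[OF I mid(1,2)])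
      have r4p: "cp.cs I (ph k) = cp.hs I (ph a) - cp.hs I (ph k)"
        using cp.R4[OF I pk uniq_up_ph[OF k mid(1,2)]] .
      show ?thesis using r2 r4p Ba Bk by simp
    qed
  qed
qed

end


theorem corollary5p11:
  fixes \<alpha> :: "nat list"
  assumes "length \<alpha> \<ge> 2"
    and "\<forall>a\<in>set \<alpha>. a > 0"
    and "hd \<alpha> \<ge> 2" and "last \<alpha> \<ge> 2"
    and "rev \<alpha> = \<alpha>"
    and "odd (length \<alpha>)"
  shows "(\<forall>k\<in>{1..fence_n \<alpha>}.
            mesic (fence_elems \<alpha>) (fence_le \<alpha>)
              (\<lambda>I. chi (fence_le \<alpha>) k I - chi (fence_le \<alpha>) (fence_n \<alpha> - k + 1) I) 0)
     \<longleftrightarrow>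
         (\<forall>k\<in>{1..fence_n \<alpha>}.
            mesic (fence_elems \<alpha>) (fence_le \<alpha>)
              (\<lambda>I. hat_chi k I + hat_chi (fence_n \<alpha> - k + 1) I) 1)"
proof -
  interpret F: fence_ctx \<alpha> using assms(1,3,5,6) by unfold_locales
  let ?P = "{1..fence_n \<alpha>}"
  let ?le = "(fence_cover \<alpha>)\<^sup>*\<^sup>*"
  have PE: "fence_elems \<alpha> = ?P" by (simp add: fence_elems_def)
  have LE: "fence_le \<alpha> = ?le" by (simp add: fence_le_def)
  have eA: "mesic ?P ?le (\<lambda>I. chi ?le k I - chi ?le (fence_n \<alpha> - k + 1) I) 0 \<longleftrightarrow>
      (\<forall>I\<in>ideals ?P ?le. F.cp.cs I k = F.cp.cs I (fence_n \<alpha> - k + 1))" for k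
  proof -
    have "(\<Sum>J\<in>rho_orbit ?P ?le I. chi ?le k J - chi ?le (fence_n \<alpha> - k + 1) J) /
          real (card (rho_orbit ?P ?le I)) = 0 \<longleftrightarrow> F.cp.cs I k = F.cp.cs I (fence_n \<alpha> - k + 1)"
      if I: "I \<in> ideals ?P ?le" for I
    proof -
      have "card (F.cp.orb I) > 0" by (rule F.cp.orb_card[OF I])
      then show ?thesis unfolding F.cp.cs_def F.cp.orb_def[symmetric] sum_subtractf by simp
    qed
    then show ?thesis unfolding mesic_def by blast
  qed
  have eB: "mesic ?P ?le (\<lambda>I. hat_chi k I + hat_chi (fence_n \<alpha> - k + 1) I) 1 \<longleftrightarrow>
      (\<forall>I\<in>ideals ?P ?le. F.cp.hs I k + F.cp.hs I (fence_n \<alpha> - k + 1) = F.cp.NN I)" for k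
  proof -
    have "(\<Sum>J\<in>rho_orbit ?P ?le I. hat_chi k J + hat_chi (fence_n \<alpha> - k + 1) J) /
          real (card (rho_orbit ?P ?le I)) = 1 \<longleftrightarrow>
          F.cp.hs I k + F.cp.hs I (fence_n \<alpha> - k + 1) = F.cp.NN I"
      if I: "I \<in> ideals ?P ?le" for I
    proof -
      have "card (F.cp.orb I) > 0" by (rule F.cp.orb_card[OF I])
      then show ?thesis unfolding F.cp.hs_def F.cp.NN_def F.cp.orb_def[symmetric] sum.distrib
        by (auto simp: divide_eq_1_iff)
    qed
    then show ?thesis unfolding mesic_def by blast
  qed
  show ?thesis unfolding PE LE eA eB using F.main_orbit by blast
qed

end
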